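(* Let $K:\mathbb G\setminus\{0\}\to\mathbb R$ be continuous with $|K(p)|\le B/d(p,0)$ for all $p\ne0$. Let $\mu$ be a $1$-regular Radon measure on $\mathbb G$ with regularity constant $C_R$ such that $\operatorname{supp}\mu=A\cup B'$, where $B'$ is bounded and $\operatorname{dist}(A,B')\ge\operatorname{diam}(B')$. Let $\mu_1=\mu|_A$ and $\mu_2=\mu|_{B'}$. If $$\|T_{\mu_1}\|_{L^2(\mu_1)\to L^2(\mu_1)}\le C_1<\infty\quad\text{and}\quad\|T_{\mu_2}\|_{L^2(\mu_2)\to L^2(\mu_2)}\le C_2<\infty,$$ then $\|T_\mu\|_{L^2(\mu)\to L^2(\mu)}\le C$ for a constant $C$ depending only on $C_1,C_2,C_R$ and $B$ (and $\mathbb G,d$).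
   Context: $\mathbb G$ is a Carnot group (identified with $\mathbb R^N$ via exponential coordinates, identity $0$) equipped with a fixed left-invariant metric $d$ homogeneous with respect to the Carnot dilations; $B(p,r)$ are $d$-balls. A Radon measure $\mu$ is $1$-regular with constant $C_R\ge1$ if $C_R^{-1}r\le\mu(B(p,r))\le C_Rr$ for all $p\in\operatorname{supp}\mu$ and $0<r\le\operatorname{diam}(\operatorname{supp}\mu)$. For an upper $1$-regular measure $\nu$ (i.e. $\nu(B(p,r))\lesssim r$) and $\varepsilon>0$, $T_{\nu,\varepsilon}f(p)=\int_{d(p,q)>\varepsilon}K(q^{-1}p)f(q)\,d\nu(q)$, and $\|T_\nu\|_{L^2(\nu)\to L^2(\nu)}$ denotes the least $C$ with $\|T_{\nu,\varepsilon}f\|_{L^2(\nu)}\le C\|f\|_{L^2(\nu)}$ for all $f\in L^2(\nu)$ and all $\varepsilon>0$. *)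

theory Defs
  imports "HOL-Analysis.Analysis" "HOL-Probability.Probability"
begin

definition poly_map :: "('b::euclidean_space \<Rightarrow> 'c::euclidean_space) \<Rightarrow> bool" where
  "poly_map F \<longleftrightarrow> (\<forall>c\<in>Basis. \<exists>E coef. finite E \<and>
      (\<forall>x. F x \<bullet> c = (\<Sum>e\<in>E. coef e * (\<Prod>b\<in>Basis. (x \<bullet> b) ^ (e b)))))"

text \<open>Lie bracket of the Lie algebra (identified with the underlying space via
exponential coordinates): the second order term of the group commutator
(tx)(ty)(tx)^{-1}(ty)^{-1}; in exponential coordinates the inverse of x is -x.\<close>
definition lie_br :: "('a::euclidean_space \<Rightarrow> 'a \<Rightarrow> 'a) \<Rightarrow> 'a \<Rightarrow> 'a \<Rightarrow> 'a" where
  "lie_br gmul x y = Lim (at (0::real))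
     (\<lambda>t. (1 / t^2) *\<^sub>R gmul (gmul (t *\<^sub>R x) (t *\<^sub>R y)) (gmul (- (t *\<^sub>R x)) (- (t *\<^sub>R y))))"

text \<open>A Carnot group of step s on the Euclidean space 'a in exponential
coordinates: a group law with identity 0 which is polynomial (hence a Lie group
structure), for which the lines through 0 are one-parameter subgroups (this
says exactly that the identity map is the exponential map), and whose Lie
algebra is stratified as V 1 \<oplus> ... \<oplus> V s with [V 1, V j] = V (j+1),
[V 1, V s] = 0.\<close>
definition carnot_group :: "('a::euclidean_space \<Rightarrow> 'a \<Rightarrow> 'a) \<Rightarrow> (nat \<Rightarrow> 'a set) \<Rightarrow> nat \<Rightarrow> bool" where
  "carnot_group gmul V s \<longleftrightarrow>
     (\<forall>x y z. gmul (gmul x y) z = gmul x (gmul y z)) \<and>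
     (\<forall>x. gmul 0 x = x \<and> gmul x 0 = x) \<and>
     (\<forall>x a b. gmul (a *\<^sub>R x) (b *\<^sub>R x) = (a + b) *\<^sub>R x) \<and>
     poly_map (\<lambda>z::'a \<times> 'a. gmul (fst z) (snd z)) \<and>
     1 \<le> s \<and>
     (\<forall>j\<in>{1..s}. subspace (V j)) \<and>
     (\<forall>x. \<exists>!v. (\<forall>j. v j \<in> (if j \<in> {1..s} then V j else {0})) \<and> x = sum v {1..s}) \<and>
     (\<forall>j. 1 \<le> j \<and> j < s \<longrightarrow>
         span {lie_br gmul v w | v w. v \<in> V 1 \<and> w \<in> V j} = V (Suc j)) \<and>
     (\<forall>v\<in>V 1. \<forall>w\<in>V s. lie_br gmul v w = 0)"

definition carnot_dilations :: "(nat \<Rightarrow> 'a::euclidean_space set) \<Rightarrow> nat \<Rightarrow> (real \<Rightarrow> 'a \<Rightarrow> 'a) \<Rightarrow> bool" where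
  "carnot_dilations V s dil \<longleftrightarrow>
     (\<forall>t>0. linear (dil t) \<and> (\<forall>j\<in>{1..s}. \<forall>v\<in>V j. dil t v = (t ^ j) *\<^sub>R v))"

definition homogeneous_distance ::
  "('a::euclidean_space \<Rightarrow> 'a \<Rightarrow> 'a) \<Rightarrow> (real \<Rightarrow> 'a \<Rightarrow> 'a) \<Rightarrow> ('a \<Rightarrow> 'a \<Rightarrow> real) \<Rightarrow> bool" where
  "homogeneous_distance gmul dil d \<longleftrightarrow>
     (\<forall>x y. d x y = 0 \<longleftrightarrow> x = y) \<and>
     (\<forall>x y. d x y = d y x) \<and>
     (\<forall>x y z. d x z \<le> d x y + d y z) \<and>
     continuous_on UNIV (\<lambda>z::'a \<times> 'a. d (fst z) (snd z)) \<and>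
     (\<forall>p x y. d (gmul p x) (gmul p y) = d x y) \<and>
     (\<forall>t>0. \<forall>x y. d (dil t x) (dil t y) = t * d x y)"

definition dball :: "('a \<Rightarrow> 'a \<Rightarrow> real) \<Rightarrow> 'a \<Rightarrow> real \<Rightarrow> 'a set" where
  "dball d p r = {q. d p q \<le> r}"

definition dsupp :: "('a \<Rightarrow> 'a \<Rightarrow> real) \<Rightarrow> 'a measure \<Rightarrow> 'a set" where
  "dsupp d \<mu> = {p. \<forall>r>0. emeasure \<mu> {q. d p q < r} > 0}"

definition ddiam :: "('a \<Rightarrow> 'a \<Rightarrow> real) \<Rightarrow> 'a set \<Rightarrow> ereal" where
  "ddiam d S = (SUP p\<in>S. SUP q\<in>S. ereal (d p q))"

definition ddist :: "('a \<Rightarrow> 'a \<Rightarrow> real) \<Rightarrow> 'a set \<Rightarrow> 'a set \<Rightarrow> ereal" where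
  "ddist d S T = (INF p\<in>S. INF q\<in>T. ereal (d p q))"

definition d_bounded :: "('a \<Rightarrow> 'a \<Rightarrow> real) \<Rightarrow> 'a set \<Rightarrow> bool" where
  "d_bounded d S \<longleftrightarrow> (\<exists>R. \<forall>p\<in>S. \<forall>q\<in>S. d p q \<le> R)"

text \<open>Radon measures on R^N = locally finite Borel measures.\<close>
definition radon_measure :: "'a::euclidean_space measure \<Rightarrow> bool" where
  "radon_measure \<mu> \<longleftrightarrow> sets \<mu> = sets borel \<and> (\<forall>K. compact K \<longrightarrow> emeasure \<mu> K < \<infinity>)"

definition one_regular :: "('a \<Rightarrow> 'a \<Rightarrow> real) \<Rightarrow> 'a measure \<Rightarrow> real \<Rightarrow> bool" where
  "one_regular d \<mu> CR \<longleftrightarrow> 1 \<le> CR \<and>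
     (\<forall>p\<in>dsupp d \<mu>. \<forall>r. 0 < r \<and> ereal r \<le> ddiam d (dsupp d \<mu>) \<longrightarrow>
        ennreal (r / CR) \<le> emeasure \<mu> (dball d p r) \<and> emeasure \<mu> (dball d p r) \<le> ennreal (CR * r))"

definition restr_measure :: "'a measure \<Rightarrow> 'a set \<Rightarrow> 'a measure" where
  "restr_measure \<mu> A = density \<mu> (indicator A)"

definition trunc_SIO ::
  "('a::euclidean_space \<Rightarrow> 'a \<Rightarrow> 'a) \<Rightarrow> ('a \<Rightarrow> 'a \<Rightarrow> real) \<Rightarrow> ('a \<Rightarrow> real) \<Rightarrow> 'a measure
    \<Rightarrow> real \<Rightarrow> ('a \<Rightarrow> real) \<Rightarrow> 'a \<Rightarrow> real" where
  "trunc_SIO gmul d K \<nu> \<epsilon> f p =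
     (\<integral>q. indicator {q. d p q > \<epsilon>} q * K (gmul (- q) p) * f q \<partial>\<nu>)"

text \<open>\<open>SIO_bounded gmul d K \<nu> C\<close>: the L2(\<nu>) operator norm of T_\<nu> is at most C,
i.e. \<open>\<parallel>T_{\<nu>,\<epsilon>} f\<parallel> \<le> C \<parallel>f\<parallel>\<close> for all f in L2(\<nu>) and all \<epsilon> > 0 (squared form).\<close>
definition SIO_bounded ::
  "('a::euclidean_space \<Rightarrow> 'a \<Rightarrow> 'a) \<Rightarrow> ('a \<Rightarrow> 'a \<Rightarrow> real) \<Rightarrow> ('a \<Rightarrow> real) \<Rightarrow> 'a measure \<Rightarrow> real \<Rightarrow> bool" where
  "SIO_bounded gmul d K \<nu> C \<longleftrightarrow> 0 \<le> C \<and>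
     (\<forall>\<epsilon>>0. \<forall>f. f \<in> borel_measurable \<nu> \<and> (\<integral>\<^sup>+q. ennreal ((f q)^2) \<partial>\<nu>) < \<infinity> \<longrightarrow>
        (\<integral>\<^sup>+p. ennreal ((trunc_SIO gmul d K \<nu> \<epsilon> f p)^2) \<partial>\<nu>)
          \<le> ennreal (C^2) * (\<integral>\<^sup>+q. ennreal ((f q)^2) \<partial>\<nu>))"

end

theory Submission
  imports Defs
begin

lemma poly_map_cont:
  fixes F :: "'b::euclidean_space \<Rightarrow> 'c::euclidean_space"
  assumes "poly_map F"
  shows "continuous_on UNIV F"
proof -
  have c: "continuous_on UNIV (\<lambda>x. F x \<bullet> c)" if "c \<in> Basis" for c
  proof -
    have ex: "\<exists>E coef. finite E \<and> (\<forall>x. F x \<bullet> c = (\<Sum>e\<in>E. coef e * (\<Prod>b\<in>Basis. (x \<bullet> b) ^ (e b))))"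
      using assms that unfolding poly_map_def by (rule bspec)
    obtain E coef where "finite E" and e: "\<forall>x. F x \<bullet> c = (\<Sum>e\<in>E. coef e * (\<Prod>b\<in>Basis. (x \<bullet> b) ^ (e b)))"
      using ex by blast
    have "continuous_on UNIV (\<lambda>x. (\<Sum>e\<in>E. coef e * (\<Prod>b\<in>Basis. (x \<bullet> b) ^ (e b))))"
      by (intro continuous_on_sum continuous_on_mult continuous_on_const continuous_on_prod continuous_on_power continuous_on_inner continuous_on_id)
    then show ?thesis using e by simp
  qed
  have "continuous_on UNIV (\<lambda>x. \<Sum>c\<in>Basis. (F x \<bullet> c) *\<^sub>R c)"
    by (intro continuous_on_sum continuous_on_scaleR continuous_on_const c)
  then show ?thesis by (simp add: euclidean_representation)
qed

lemma gmul_facts: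
  assumes "carnot_group gmul V s"
  shows "gmul (- q) q = 0" and "continuous_on UNIV (\<lambda>z. gmul (fst z) (snd z))"
proof -
  have h: "\<forall>x a b. gmul (a *\<^sub>R x) (b *\<^sub>R x) = (a + b) *\<^sub>R x"
    using assms by (simp add: carnot_group_def)
  have "gmul ((-1) *\<^sub>R q) (1 *\<^sub>R q) = ((-1) + 1) *\<^sub>R q"
    using h by blast
  then show "gmul (- q) q = 0" by simp
  show "continuous_on UNIV (\<lambda>z. gmul (fst z) (snd z))"
    using assms by (intro poly_map_cont) (simp add: carnot_group_def)
qed

lemma gmul_cont2:
  assumes "carnot_group gmul V s"
  shows "continuous_on UNIV (\<lambda>z. gmul (- snd z) (fst z))"
proof -
  have "continuous_on UNIV ((\<lambda>z. gmul (fst z) (snd z)) \<circ> (\<lambda>z. (- snd z, fst z)))"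
    by (rule continuous_on_compose) (auto intro!: continuous_intros gmul_facts(2)[OF assms] continuous_on_subset[OF gmul_facts(2)[OF assms]] simp: o_def)
  then show ?thesis by (simp add: o_def)
qed

lemma kernel_bound:
  assumes "carnot_group gmul V s" "homogeneous_distance gmul dil d"
    and "\<forall>p. p \<noteq> 0 \<longrightarrow> \<bar>K p\<bar> \<le> Bk / d p 0" and "p \<noteq> q"
  shows "\<bar>K (gmul (- q) p)\<bar> \<le> Bk / d p q"
proof -
  have "d (gmul (- q) p) (gmul (- q) q) = d p q"
    using assms(2) unfolding homogeneous_distance_def by blast
  then have e: "d (gmul (- q) p) 0 = d p q" using gmul_facts(1)[OF assms(1)] by simp
  have "d p q \<noteq> 0" using assms(2,4) unfolding homogeneous_distance_def by blast
  moreover have "d 0 0 = (0::real)" using assms(2) unfolding homogeneous_distance_def by blast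
  ultimately have "gmul (- q) p \<noteq> 0" using e by force
  then show ?thesis using assms(3) e by auto
qed

locale dm =
  fixes d :: "'a::euclidean_space \<Rightarrow> 'a \<Rightarrow> real"
  assumes d0: "\<And>x y. d x y = 0 \<longleftrightarrow> x = y"
    and dsym: "\<And>x y. d x y = d y x"
    and dtri: "\<And>x y z. d x z \<le> d x y + d y z"
    and dcont: "continuous_on UNIV (\<lambda>z::'a \<times> 'a. d (fst z) (snd z))"
begin

lemma dnn: "0 \<le> d x y"
proof -
  have "d x x \<le> d x y + d y x" by (rule dtri)
  then show ?thesis using d0[of x x] dsym[of x y] by simp
qed

lemma dcont2: "continuous_on UNIV (\<lambda>z. d (f z) (g z))"
  if "continuous_on UNIV f" "continuous_on UNIV g" for f g :: "'b::topological_space \<Rightarrow> 'a"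
proof -
  have "continuous_on UNIV ((\<lambda>z::'a \<times> 'a. d (fst z) (snd z)) \<circ> (\<lambda>z. (f z, g z)))"
    by (rule continuous_on_compose) (auto intro!: continuous_intros that continuous_on_subset[OF dcont])
  then show ?thesis by (simp add: o_def)
qed

lemma dcont_p: "continuous_on UNIV (d p)"
  using dcont2[of "\<lambda>_. p" "\<lambda>x. x"] by (simp add: continuous_on_const continuous_on_id)

lemma open_dball: "open {q. d p q < r}"
  by (rule open_Collect_less) (auto intro: dcont_p continuous_on_const)

lemma closed_dball: "closed (dball d p r)"
  unfolding dball_def by (rule closed_Collect_le) (auto intro: dcont_p continuous_on_const)

lemma dball_borel[measurable]: "dball d p r \<in> sets borel"
  using closed_dball by simp

lemma dfun_borel[measurable]: "d p \<in> borel_measurable borel"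
  using dcont_p by (rule borel_measurable_continuous_onI)

lemma dpair_borel: "(\<lambda>z. d (fst z) (snd z)) \<in> borel_measurable borel"
  using dcont by (rule borel_measurable_continuous_onI)

end

lemma radon_sigma_finite:
  fixes \<mu> :: "'b::euclidean_space measure"
  assumes "radon_measure \<mu>"
  shows "sigma_finite_measure \<mu>"
proof
  have s: "sets \<mu> = sets borel" using assms unfolding radon_measure_def by blast
  show "\<exists>A. countable A \<and> A \<subseteq> sets \<mu> \<and> \<Union> A = space \<mu> \<and> (\<forall>a\<in>A. emeasure \<mu> a \<noteq> \<infinity>)"
  proof (intro exI conjI)
    show "countable (range (\<lambda>n::nat. cball (0::'b) (real n)))" by simp
    show "range (\<lambda>n::nat. cball (0::'b) (real n)) \<subseteq> sets \<mu>"
    proof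
      fix X assume "X \<in> range (\<lambda>n::nat. cball (0::'b) (real n))"
      then obtain n :: nat where "X = cball 0 (real n)" by blast
      then show "X \<in> sets \<mu>" using s borel_closed[OF closed_cball] by simp
    qed
    show "\<Union> (range (\<lambda>n::nat. cball (0::'b) (real n))) = space \<mu>"
      using sets_eq_imp_space_eq[OF s] by (auto simp: real_arch_simple)
    have rad: "\<And>K. compact K \<Longrightarrow> emeasure \<mu> K < \<top>" using assms by (simp add: radon_measure_def)
    show "\<forall>a\<in>range (\<lambda>n::nat. cball (0::'b) (real n)). emeasure \<mu> a \<noteq> \<infinity>"
      using rad[OF compact_cball] by (auto simp: less_top[symmetric])
  qed
qed

context dm begin

lemma supp_facts:
  assumes "radon_measure \<mu>"
  shows "open (- dsupp d \<mu>)" and "dsupp d \<mu> \<in> sets borel" and "AE p in \<mu>. p \<in> dsupp d \<mu>"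
proof -
  have s: "sets \<mu> = sets borel" using assms unfolding radon_measure_def by blast
  have sp: "space \<mu> = UNIV" using sets_eq_imp_space_eq[OF s] by simp
  define F where "F = {U. \<exists>p r. r > 0 \<and> U = {q. d p q < r} \<and> emeasure \<mu> U = 0}"
  have Fo: "\<And>U. U \<in> F \<Longrightarrow> open U" unfolding F_def using open_dball by auto
  have sub1: "- dsupp d \<mu> \<subseteq> \<Union>F"
  proof
    fix p assume "p \<in> - dsupp d \<mu>"
    then obtain r where r: "r > 0" "\<not> emeasure \<mu> {q. d p q < r} > 0" unfolding dsupp_def by auto
    then have "{q. d p q < r} \<in> F" unfolding F_def by (auto simp: zero_less_iff_neq_zero)
    moreover have "p \<in> {q. d p q < r}" using r d0[of p p] by simp
    ultimately show "p \<in> \<Union>F" by blast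
  qed
  have sub2: "\<Union>F \<subseteq> - dsupp d \<mu>"
  proof
    fix q assume "q \<in> \<Union>F"
    then obtain p r where pr: "r > 0" "emeasure \<mu> {x. d p x < r} = 0" "d p q < r"
      unfolding F_def by auto
    have "{x. d q x < r - d p q} \<subseteq> {x. d p x < r}"
    proof
      fix x assume "x \<in> {x. d q x < r - d p q}"
      moreover have "d p x \<le> d p q + d q x" by (rule dtri)
      ultimately show "x \<in> {x. d p x < r}" by simp
    qed
    then have "emeasure \<mu> {x. d q x < r - d p q} \<le> emeasure \<mu> {x. d p x < r}"
      by (rule emeasure_mono) (use s borel_open[OF open_dball] in simp_all)
    then have "emeasure \<mu> {x. d q x < r - d p q} = 0" using pr by simp
    moreover have "r - d p q > 0" using pr by simp
    ultimately have "\<not> (\<forall>r>0. emeasure \<mu> {x. d q x < r} > 0)"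
      by (metis less_irrefl)
    then show "q \<in> - dsupp d \<mu>" unfolding dsupp_def by simp
  qed
  show o: "open (- dsupp d \<mu>)"
  proof -
    have "- dsupp d \<mu> = \<Union>F" using sub1 sub2 by (rule subset_antisym)
    then show ?thesis using Fo by (simp add: open_Union)
  qed
  then show "dsupp d \<mu> \<in> sets borel"
  proof -
    have "closed (dsupp d \<mu>)" using o by (simp add: closed_def)
    then show ?thesis by (rule borel_closed)
  qed
  obtain F' where F': "F' \<subseteq> F" "countable F'" "\<Union>F' = \<Union>F"
    using Lindelof_openin[of F UNIV] Fo by (auto simp: openin_open_eq)
  have "(\<Union>U\<in>F'. U) \<in> null_sets \<mu>"
  proof (rule null_sets_UN'[OF F'(2)])
    fix U assume "U \<in> F'"
    then have "U \<in> F" using F' by auto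
    then obtain p r where pr: "U = {q. d p q < r}" "emeasure \<mu> U = 0" unfolding F_def by blast
    have "U \<in> sets \<mu>" using s borel_open[OF open_dball[of p r]] pr(1) by simp
    then show "U \<in> null_sets \<mu>" using pr(2) by (intro null_setsI)
  qed
  then show "AE p in \<mu>. p \<in> dsupp d \<mu>"
    by (rule AE_I') (use sub1 F' in auto)
qed

end

lemma le_ddiam: "p \<in> S \<Longrightarrow> q \<in> S \<Longrightarrow> ereal (d p q) \<le> ddiam d S"
  unfolding ddiam_def by (auto intro: SUP_upper2)

lemma ddist_le: "p \<in> S \<Longrightarrow> q \<in> T \<Longrightarrow> ddist d S T \<le> ereal (d p q)"
  unfolding ddist_def by (auto intro: INF_lower2)

locale reg = dm d for d :: "'a::euclidean_space \<Rightarrow> 'a \<Rightarrow> real" +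
  fixes \<mu> :: "'a measure" and CR :: real
  assumes radon: "radon_measure \<mu>" and oreg: "one_regular d \<mu> CR"
    and diampos: "ddiam d (dsupp d \<mu>) > 0"
begin

lemma sets_mu[measurable_cong]: "sets \<mu> = sets borel" using radon unfolding radon_measure_def by blast
lemma space_mu[simp]: "space \<mu> = UNIV" using sets_eq_imp_space_eq[OF sets_mu] by simp

lemma CR1: "1 \<le> CR" using oreg unfolding one_regular_def by blast

lemma upper_reg:
  assumes "p \<in> dsupp d \<mu>" "r > 0"
  shows "emeasure \<mu> (dball d p r) \<le> ennreal (CR * r)"
proof (cases "ereal r \<le> ddiam d (dsupp d \<mu>)")
  case True
  then show ?thesis using oreg assms unfolding one_regular_def by blast
next
  case False
  define S where "S = dsupp d \<mu>"
  have fin: "ddiam d S \<noteq> \<infinity>" "ddiam d S \<noteq> -\<infinity>" using False diampos unfolding S_def by auto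
  define D0 where "D0 = real_of_ereal (ddiam d S)"
  have D0: "ereal D0 = ddiam d S" using fin unfolding D0_def by (cases "ddiam d S") auto
  have D0pos: "0 < D0" using D0 diampos unfolding S_def by (metis ereal_less(2))
  have D0r: "D0 < r" using D0 False unfolding S_def by (metis ereal_less_eq(3) linorder_not_le)
  have "AE x in \<mu>. x \<in> dball d p r \<longrightarrow> x \<in> dball d p D0"
    using supp_facts(3)[OF radon]
  proof eventually_elim
    case (elim x)
    have "ereal (d p x) \<le> ereal D0" using le_ddiam[of p S x] elim assms(1) D0 unfolding S_def by simp
    then show ?case unfolding dball_def by simp
  qed
  then have "emeasure \<mu> (dball d p r) \<le> emeasure \<mu> (dball d p D0)"
    by (rule emeasure_mono_AE) simp
  also have "\<dots> \<le> ennreal (CR * D0)"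
    using oreg assms D0pos D0 unfolding one_regular_def S_def by auto
  also have "\<dots> \<le> ennreal (CR * r)" using D0r CR1 by (intro ennreal_leI) simp
  finally show ?thesis .
qed

lemma singleton_null: "emeasure \<mu> {x} = 0"
proof (cases "x \<in> dsupp d \<mu>")
  case False
  have "AE y in \<mu>. y \<noteq> x" using supp_facts(3)[OF radon] by eventually_elim (use False in auto)
  moreover have "{y\<in>space \<mu>. \<not> y \<noteq> x} = {x}" by auto
  ultimately show ?thesis using AE_iff_measurable[of "{x}" \<mu> "\<lambda>y. y \<noteq> x"] by simp
next
  case True
  have le: "emeasure \<mu> {x} \<le> ennreal (CR * r)" if "r > 0" for r
  proof -
    have "emeasure \<mu> {x} \<le> emeasure \<mu> (dball d x r)"
      by (rule emeasure_mono) (use d0[of x x] that in \<open>auto simp: dball_def\<close>)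
    also have "\<dots> \<le> ennreal (CR * r)" by (rule upper_reg[OF True that])
    finally show ?thesis .
  qed
  have "emeasure \<mu> {x} \<noteq> \<infinity>" using le[of 1] by (auto simp: top_unique)
  then obtain m where m: "emeasure \<mu> {x} = ennreal m" "0 \<le> m" by (cases "emeasure \<mu> {x}") auto
  show ?thesis
  proof (rule ccontr)
    assume "emeasure \<mu> {x} \<noteq> 0"
    then have mp: "m > 0" using m by auto
    have "ennreal m \<le> ennreal (CR * (m / (2 * CR)))" using le[of "m / (2*CR)"] m mp CR1 by simp
    then have "m \<le> m / 2" using CR1 mp by (simp add: ennreal_le_iff)
    then show False using mp by simp
  qed
qed

lemma dyadic_exists:
  fixes x D :: real
  assumes "D > 0" "D \<le> x"
  obtains k :: nat where "2^k * D \<le> x" "x < 2^(Suc k) * D"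
proof -
  obtain n :: nat where n: "x / D < 2 ^ n" using real_arch_pow[of 2 "x/D"] by auto
  have "x < 2^n * D" using n assms by (simp add: field_simps)
  define n0 where "n0 = (LEAST n::nat. x < 2^n * D)"
  have n0: "x < 2^n0 * D" unfolding n0_def by (rule LeastI) fact
  have "n0 \<noteq> 0"
  proof
    assume "n0 = 0" then show False using n0 assms by simp
  qed
  then obtain k where k: "n0 = Suc k" by (cases n0) auto
  have "\<not> x < 2^k * D" using not_less_Least[of k "\<lambda>n. x < 2^n * D"] k unfolding n0_def by simp
  then show ?thesis using that[of k] n0 k by (simp add: not_less)
qed

lemma tail:
  assumes q0: "q0 \<in> dsupp d \<mu>" and D: "D > 0"
  shows "(\<integral>\<^sup>+ p. indicator {p. D \<le> d q0 p} p * ennreal (1 / (d q0 p)\<^sup>2) \<partial>\<mu>) \<le> ennreal (4 * CR / D)"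
proof -
  define g where "g k p = indicator (dball d q0 (2^(Suc k) * D)) p * ennreal (1 / (4^k * D\<^sup>2))" for k p
  have pw: "indicator {p. D \<le> d q0 p} p * ennreal (1 / (d q0 p)\<^sup>2) \<le> (\<Sum>k. g k p)" for p
  proof (cases "D \<le> d q0 p")
    case False then show ?thesis by simp
  next
    case True
    obtain k :: nat where k: "2^k * D \<le> d q0 p" "d q0 p < 2^(Suc k) * D"
      using dyadic_exists[OF D True] by blast
    have "(2^k * D)\<^sup>2 \<le> (d q0 p)\<^sup>2" using k D by (intro power_mono) auto
    moreover have "(2^k * D)\<^sup>2 = 4^k * D\<^sup>2"
    proof -
      have "(4::real)^k = 2^k * 2^k" by (simp add: power_mult_distrib[symmetric])
      then show ?thesis by (simp add: power2_eq_square algebra_simps)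
    qed
    moreover have dpos: "d q0 p > 0" using True D by linarith
    ultimately have "1 / (d q0 p)\<^sup>2 \<le> 1 / (4^k * D\<^sup>2)" using D
      by (intro divide_left_mono) auto
    then have "indicator {p. D \<le> d q0 p} p * ennreal (1 / (d q0 p)\<^sup>2) \<le> g k p"
      using True k unfolding g_def dball_def by (auto intro: ennreal_leI)
    also have "\<dots> \<le> (\<Sum>k. g k p)"
      using sum_le_suminf[OF summableI, of "{k}" "\<lambda>k. g k p"] by simp
    finally show ?thesis .
  qed
  have "(\<integral>\<^sup>+ p. indicator {p. D \<le> d q0 p} p * ennreal (1 / (d q0 p)\<^sup>2) \<partial>\<mu>) \<le> (\<integral>\<^sup>+ p. (\<Sum>k. g k p) \<partial>\<mu>)"
    by (rule nn_integral_mono) (rule pw)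
  also have "\<dots> = (\<Sum>k. \<integral>\<^sup>+ p. g k p \<partial>\<mu>)"
    by (rule nn_integral_suminf) (simp add: g_def)
  also have "\<dots> = (\<Sum>k. ennreal (1 / (4^k * D\<^sup>2)) * emeasure \<mu> (dball d q0 (2^(Suc k) * D)))"
    unfolding g_def by (subst mult.commute) (simp add: nn_integral_cmult_indicator)
  also have "\<dots> \<le> (\<Sum>k. ennreal (2 * CR / D * (1/2)^k))"
  proof (rule suminf_le[OF _ summableI summableI])
    fix k :: nat
    have "ennreal (1 / (4^k * D\<^sup>2)) * emeasure \<mu> (dball d q0 (2^(Suc k) * D))
        \<le> ennreal (1 / (4^k * D\<^sup>2)) * ennreal (CR * (2^(Suc k) * D))"
      by (intro mult_left_mono upper_reg q0) (use D in auto)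
    also have "\<dots> = ennreal (1 / (4^k * D\<^sup>2) * (CR * (2^(Suc k) * D)))"
      by (rule ennreal_mult[symmetric]) (use D CR1 in auto)
    also have "1 / (4^k * D\<^sup>2) * (CR * (2^(Suc k) * D)) = 2 * CR / D * (1/2)^k"
    proof -
      have "(4::real)^k = 2^k * 2^k" by (simp add: power_mult_distrib[symmetric])
      then show ?thesis using D by (simp add: field_simps power2_eq_square power_one_over)
    qed
    finally show "ennreal (1 / (4^k * D\<^sup>2)) * emeasure \<mu> (dball d q0 (2^(Suc k) * D)) \<le> ennreal (2 * CR / D * (1/2)^k)" .
  qed
  also have "\<dots> = ennreal (\<Sum>k. 2 * CR / D * (1/2)^k)"
    using D CR1 by (intro suminf_ennreal2) (auto intro: summable_mult summable_geometric)
  also have "(\<Sum>k. 2 * CR / D * (1/2::real)^k) = 4 * CR / D"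
    by (subst suminf_mult[OF summable_geometric]) (auto simp: suminf_geometric)
  finally show ?thesis .
qed

end

locale core = reg d \<mu> CR for d :: "'a::euclidean_space \<Rightarrow> 'a \<Rightarrow> real" and \<mu> CR +
  fixes gmul :: "'a \<Rightarrow> 'a \<Rightarrow> 'a" and K :: "'a \<Rightarrow> real" and Bk :: real
    and A B' :: "'a set" and C1 C2 :: real
  assumes kb: "\<And>p q. p \<noteq> q \<Longrightarrow> \<bar>K (gmul (- q) p)\<bar> \<le> Bk / d p q"
    and Kg: "(\<lambda>z. K (gmul (- snd z) (fst z))) \<in> borel_measurable borel"
    and Bk0: "0 \<le> Bk"
    and suppAB: "dsupp d \<mu> = A \<union> B'" and bdd: "d_bounded d B'" and sep: "ddiam d B' \<le> ddist d A B'"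
    and S1: "SIO_bounded gmul d K (restr_measure \<mu> A) C1"
    and S2: "SIO_bounded gmul d K (restr_measure \<mu> B') C2"
begin

lemma AB_int: "x \<in> A \<Longrightarrow> x \<in> B' \<Longrightarrow> B' = {x}"
proof -
  assume x: "x \<in> A" "x \<in> B'"
  have "ddiam d B' \<le> 0" using sep ddist_le[OF x, of d] d0[of x x] by (metis order_trans zero_ereal_def)
  then have "y = x" if "y \<in> B'" for y
  proof -
    have "ereal (d x y) \<le> 0" using le_ddiam[OF x(2) that, of d] \<open>ddiam d B' \<le> 0\<close> by (metis order_trans)
    then have "d x y = 0" using dnn[of x y] by simp
    then show ?thesis using d0 by simp
  qed
  then show "B' = {x}" using x by blast
qed

lemma AB_null: "AE q in \<mu>. \<not> (q \<in> A \<and> q \<in> B')"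
proof (cases "A \<inter> B' = {}")
  case True then show ?thesis by auto
next
  case False
  then obtain x where x: "x \<in> A" "x \<in> B'" by auto
  have "{x} \<in> null_sets \<mu>" using singleton_null[of x] by (simp add: null_sets_def)
  then show ?thesis by (rule AE_I') (use AB_int[OF x] in auto)
qed

lemma B'_cases:
  "B' = {} \<or> (\<exists>x. B' = {x}) \<or> (\<exists>q0 D. q0 \<in> B' \<and> D > 0 \<and> ddiam d B' = ereal D)"
proof (cases "\<exists>x y. x \<in> B' \<and> y \<in> B' \<and> x \<noteq> y")
  case False then show ?thesis by (metis all_not_in_conv empty_subsetI insert_subset subset_antisym subsetI singletonI singletonD)
next
  case True
  then obtain x y where xy: "x \<in> B'" "y \<in> B'" "x \<noteq> y" by auto
  obtain R where R: "\<forall>p\<in>B'. \<forall>q\<in>B'. d p q \<le> R" using bdd unfolding d_bounded_def by auto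
  have up: "ddiam d B' \<le> ereal R" unfolding ddiam_def using R by (auto intro!: SUP_least)
  have lo: "ereal (d x y) \<le> ddiam d B'" by (rule le_ddiam[OF xy(1,2)])
  have pos: "0 < d x y" using dnn[of x y] d0[of x y] xy(3) by simp
  define D where "D = real_of_ereal (ddiam d B')"
  have e: "ddiam d B' = ereal D" unfolding D_def using up lo by (cases "ddiam d B'") auto
  have "D > 0" using lo pos e by simp
  then show ?thesis using xy e by blast
qed

lemma finite_closed: "finite S \<Longrightarrow> S \<in> sets borel" for S :: "'a set"
  by (simp add: finite_imp_closed)

lemma AB_meas[measurable]: "A \<in> sets borel" "B' \<in> sets borel"
proof -
  have Ssets: "dsupp d \<mu> \<in> sets borel" using supp_facts(2)[OF radon] .
  have "B' \<in> sets borel"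
  proof -
    consider "B' = {}" | x where "B' = {x}" | q0 D where "q0 \<in> B'" "D > 0" "ddiam d B' = ereal D"
      using B'_cases by blast
    then show ?thesis
    proof cases
      case 3
      define U where "U = (\<Union>q\<in>B'. {x. d q x < D})"
      have Uo: "open U" unfolding U_def using open_dball by blast
      have "B' = dsupp d \<mu> \<inter> U"
      proof
        show "B' \<subseteq> dsupp d \<mu> \<inter> U"
        proof
          fix x assume x: "x \<in> B'"
          have "d x x < D" using d0[of x x] 3(2) by simp
          then show "x \<in> dsupp d \<mu> \<inter> U" using suppAB x unfolding U_def by blast
        qed
        show "dsupp d \<mu> \<inter> U \<subseteq> B'"
        proof
          fix x assume x: "x \<in> dsupp d \<mu> \<inter> U"
          then obtain q where q: "q \<in> B'" "d q x < D" unfolding U_def by auto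
          show "x \<in> B'"
          proof (rule ccontr)
            assume "x \<notin> B'"
            then have "x \<in> A" using x suppAB by auto
            then have "ereal D \<le> ereal (d x q)" using ddist_le[OF \<open>x \<in> A\<close> q(1), of d] sep 3(3) by (metis order_trans)
            then show False using q(2) dsym[of x q] by simp
          qed
        qed
      qed
      then show ?thesis using Ssets Uo by simp
    qed (auto intro: finite_closed)
  qed
  moreover have "A = (dsupp d \<mu> - B') \<union> (A \<inter> B')" using suppAB by auto
  moreover have "A \<inter> B' \<in> sets borel"
  proof (cases "A \<inter> B' = {}")
    case False
    then obtain x where "x \<in> A" "x \<in> B'" by auto
    then have "A \<inter> B' = {x}" using AB_int by auto
    then show ?thesis by simp
  qed simp
  ultimately show "A \<in> sets borel" "B' \<in> sets borel" using Ssets by (metis sets.Diff sets.Un)+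
qed

end

context core begin

definition hh :: "real \<Rightarrow> ('a \<Rightarrow> real) \<Rightarrow> 'a \<Rightarrow> 'a \<Rightarrow> real" where
  "hh \<epsilon> f p q = indicator {q. d p q > \<epsilon>} q * K (gmul (- q) p) * f q"

lemma sets_pair_mu: "sets (\<mu> \<Otimes>\<^sub>M \<mu>) = sets borel"
proof -
  have "sets (\<mu> \<Otimes>\<^sub>M \<mu>) = sets (borel \<Otimes>\<^sub>M borel)"
    by (rule sets_pair_measure_cong[OF sets_mu sets_mu])
  also have "\<dots> = sets borel" using borel_prod[where 'a='a and 'b='a] by (rule arg_cong)
  finally show ?thesis .
qed

lemma snd_meas: "(snd :: 'a \<times> 'a \<Rightarrow> 'a) \<in> borel_measurable borel"
  by (intro borel_measurable_continuous_onI continuous_on_snd continuous_on_id)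

lemma fst_meas: "(fst :: 'a \<times> 'a \<Rightarrow> 'a) \<in> borel_measurable borel"
  by (intro borel_measurable_continuous_onI continuous_on_fst continuous_on_id)

lemma hh_meas:
  assumes f: "f \<in> borel_measurable borel"
  shows "(\<lambda>z. hh \<epsilon> f (fst z) (snd z)) \<in> borel_measurable borel"
proof -
  have o: "open {z::'a\<times>'a. \<epsilon> < d (fst z) (snd z)}"
    by (rule open_Collect_less) (auto intro: dcont continuous_on_const)
  have i: "(\<lambda>z::'a\<times>'a. indicator {q. d (fst z) q > \<epsilon>} (snd z) :: real) = indicator {z. \<epsilon> < d (fst z) (snd z)}"
    by (auto simp: indicator_def)
  have m1: "(\<lambda>z::'a\<times>'a. indicator {q. d (fst z) q > \<epsilon>} (snd z) :: real) \<in> borel_measurable borel"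
    unfolding i using borel_open[OF o] by (rule borel_measurable_indicator)
  have m3: "(\<lambda>z::'a\<times>'a. f (snd z)) \<in> borel_measurable borel"
    using measurable_compose[OF snd_meas f] by (simp add: o_def)
  show ?thesis unfolding hh_def
    by (intro borel_measurable_times m1 Kg m3)
qed

lemma hh_meas2:
  assumes f: "f \<in> borel_measurable borel" and w: "w \<in> borel_measurable borel"
  shows "(\<lambda>(p, q). w q * hh \<epsilon> f p q) \<in> borel_measurable (\<mu> \<Otimes>\<^sub>M \<mu>)"
proof -
  have "(\<lambda>z::'a\<times>'a. w (snd z) * hh \<epsilon> f (fst z) (snd z)) \<in> borel_measurable borel"
    using measurable_compose[OF snd_meas w] hh_meas[OF f] by (intro borel_measurable_times) (simp_all add: o_def)
  then have "(\<lambda>z::'a\<times>'a. w (snd z) * hh \<epsilon> f (fst z) (snd z)) \<in> borel_measurable (\<mu> \<Otimes>\<^sub>M \<mu>)"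
    by (subst measurable_cong_sets[OF sets_pair_mu refl])
  then show ?thesis by (simp add: case_prod_beta')
qed

lemma T_meas:
  assumes f: "f \<in> borel_measurable borel" and w: "w \<in> borel_measurable borel"
  shows "(\<lambda>p. \<integral>q. w q * hh \<epsilon> f p q \<partial>\<mu>) \<in> borel_measurable borel"
proof -
  interpret sigma_finite_measure \<mu> using radon_sigma_finite[OF radon] .
  have "(\<lambda>p. \<integral>q. w q * hh \<epsilon> f p q \<partial>\<mu>) \<in> borel_measurable \<mu>"
    by (rule borel_measurable_lebesgue_integral) (use hh_meas2[OF f w] in simp)
  then show ?thesis by (subst (asm) measurable_cong_sets[OF sets_mu refl])
qed

lemma trunc_eq: "trunc_SIO gmul d K \<mu> \<epsilon> f p = (\<integral>q. hh \<epsilon> f p q \<partial>\<mu>)"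
  unfolding trunc_SIO_def hh_def by simp

lemma restr_eq: "restr_measure \<mu> W = density \<mu> (\<lambda>x. ennreal (indicator W x))"
proof -
  have "(\<lambda>x. ennreal (indicator W x)) = indicator W" by (auto simp: indicator_def fun_eq_iff)
  then show ?thesis unfolding restr_measure_def by simp
qed

lemma trunc_restr_eq:
  assumes f: "f \<in> borel_measurable borel" and W: "W \<in> sets borel"
  shows "trunc_SIO gmul d K (restr_measure \<mu> W) \<epsilon> f p = (\<integral>q. indicator W q * hh \<epsilon> f p q \<partial>\<mu>)"
proof -
  have m: "hh \<epsilon> f p \<in> borel_measurable \<mu>"
  proof -
    have "(\<lambda>q. hh \<epsilon> f (fst (p, q)) (snd (p, q))) \<in> borel_measurable borel"
      by (rule measurable_compose[OF _ hh_meas[OF f]]) simp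
    then show ?thesis by (subst measurable_cong_sets[OF sets_mu refl]) simp
  qed
  have "trunc_SIO gmul d K (restr_measure \<mu> W) \<epsilon> f p = (\<integral>q. hh \<epsilon> f p q \<partial>(restr_measure \<mu> W))"
    unfolding trunc_SIO_def hh_def by simp
  also have "\<dots> = (\<integral>q. indicator W q *\<^sub>R hh \<epsilon> f p q \<partial>\<mu>)"
    unfolding restr_eq by (rule integral_density[OF m]) (use W in auto)
  finally show ?thesis by simp
qed

lemma hh_bound: "\<bar>hh \<epsilon> f p q\<bar> \<le> indicator {q. d p q > \<epsilon>} q * (Bk / d p q) * \<bar>f q\<bar>" if "\<epsilon> > 0"
proof (cases "d p q > \<epsilon>")
  case True
  then have "p \<noteq> q" using d0[of p q] that by auto
  then have "\<bar>K (gmul (- q) p)\<bar> \<le> Bk / d p q" by (rule kb)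
  then have "\<bar>K (gmul (- q) p)\<bar> * \<bar>f q\<bar> \<le> (Bk / d p q) * \<bar>f q\<bar>" by (rule mult_right_mono) simp
  then show ?thesis using True unfolding hh_def by (simp add: abs_mult)
qed (simp add: hh_def)

end

context core begin

lemma hh_p_meas:
  assumes f: "f \<in> borel_measurable borel"
  shows "hh \<epsilon> f p \<in> borel_measurable borel"
proof -
  have "(\<lambda>q. hh \<epsilon> f (fst (p, q)) (snd (p, q))) \<in> borel_measurable borel"
    by (rule measurable_compose[OF _ hh_meas[OF f]]) simp
  then show ?thesis by simp
qed

lemma ennreal_sq_le:
  fixes g :: real
  assumes "ennreal \<bar>g\<bar> \<le> X"
  shows "ennreal (g\<^sup>2) \<le> X\<^sup>2"
proof -
  have "ennreal (g\<^sup>2) = (ennreal \<bar>g\<bar>)\<^sup>2" by (simp add: ennreal_power)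
  also have "\<dots> \<le> X\<^sup>2" using assms by (intro power_mono) auto
  finally show ?thesis .
qed

lemma sq_lt_top: "(x::ennreal)\<^sup>2 < \<top> \<Longrightarrow> x < \<top>"
  by (metis less_top power_eq_top_ennreal zero_neq_numeral)

lemma abs_f_sq: "(\<integral>\<^sup>+ q. (ennreal \<bar>f q\<bar>)\<^sup>2 \<partial>\<mu>) = (\<integral>\<^sup>+ q. ennreal ((f q)\<^sup>2) \<partial>\<mu>)"
  by (rule nn_integral_cong) (simp add: ennreal_power)

lemma integ:
  assumes f: "f \<in> borel_measurable borel" and Ff: "(\<integral>\<^sup>+ q. ennreal ((f q)\<^sup>2) \<partial>\<mu>) < \<infinity>"
    and e: "\<epsilon> > 0" and p: "p \<in> dsupp d \<mu>"
  shows "integrable \<mu> (hh \<epsilon> f p)"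
proof -
  define a where "a q = ennreal (indicator {q. d p q > \<epsilon>} q * (Bk / d p q))" for q
  define b where "b q = ennreal \<bar>f q\<bar>" for q
  have am: "a \<in> borel_measurable \<mu>" unfolding a_def
    by (subst measurable_cong_sets[OF sets_mu refl]) (intro measurable_compose[OF _ measurable_ennreal] borel_measurable_times borel_measurable_divide borel_measurable_indicator' dfun_borel borel_measurable_const, auto simp: measurable_ident_sets)
  have bm: "b \<in> borel_measurable \<mu>" unfolding b_def
    by (subst measurable_cong_sets[OF sets_mu refl]) (intro measurable_compose[OF _ measurable_ennreal] borel_measurable_abs f)
  have pw: "ennreal (norm (hh \<epsilon> f p q)) \<le> a q * b q" for q
  proof -
    have nn: "0 \<le> indicator {q. d p q > \<epsilon>} q * (Bk / d p q)" using Bk0 dnn[of p q] by simp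
    have "ennreal (norm (hh \<epsilon> f p q)) \<le> ennreal (indicator {q. d p q > \<epsilon>} q * (Bk / d p q) * \<bar>f q\<bar>)"
      using hh_bound[OF e, of f p q] by (intro ennreal_leI) simp
    also have "\<dots> = a q * b q" unfolding a_def b_def using nn by (rule ennreal_mult')
    finally show ?thesis .
  qed
  have a2: "(a q)\<^sup>2 \<le> ennreal (Bk\<^sup>2) * (indicator {q. \<epsilon> \<le> d p q} q * ennreal (1 / (d p q)\<^sup>2))" for q
  proof (cases "d p q > \<epsilon>")
    case True
    have "(a q)\<^sup>2 = ennreal ((Bk / d p q)\<^sup>2)" unfolding a_def using True Bk0 dnn[of p q]
      by (simp add: ennreal_power)
    also have "\<dots> = ennreal (Bk\<^sup>2) * ennreal (1 / (d p q)\<^sup>2)"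
      by (simp add: power_divide ennreal_mult[symmetric])
    finally show ?thesis using True by simp
  qed (simp add: a_def)
  have "(\<integral>\<^sup>+ q. (a q)\<^sup>2 \<partial>\<mu>) \<le> (\<integral>\<^sup>+ q. ennreal (Bk\<^sup>2) * (indicator {q. \<epsilon> \<le> d p q} q * ennreal (1 / (d p q)\<^sup>2)) \<partial>\<mu>)"
    by (intro nn_integral_mono a2)
  also have "\<dots> = ennreal (Bk\<^sup>2) * (\<integral>\<^sup>+ q. indicator {q. \<epsilon> \<le> d p q} q * ennreal (1 / (d p q)\<^sup>2) \<partial>\<mu>)"
    by (rule nn_integral_cmult) (subst measurable_cong_sets[OF sets_mu refl], measurable)
  also have "\<dots> \<le> ennreal (Bk\<^sup>2) * ennreal (4 * CR / \<epsilon>)"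
    by (intro mult_left_mono tail p e) simp
  finally have A2: "(\<integral>\<^sup>+ q. (a q)\<^sup>2 \<partial>\<mu>) < \<top>" by (simp add: le_less_trans ennreal_mult_less_top top.not_eq_extremum)
  have B2: "(\<integral>\<^sup>+ q. (b q)\<^sup>2 \<partial>\<mu>) < \<top>" unfolding b_def abs_f_sq using Ff by simp
  have "(\<integral>\<^sup>+ q. a q * b q \<partial>\<mu>)\<^sup>2 \<le> (\<integral>\<^sup>+ q. (a q)\<^sup>2 \<partial>\<mu>) * (\<integral>\<^sup>+ q. (b q)\<^sup>2 \<partial>\<mu>)"
    by (rule Cauchy_Schwarz_nn_integral[OF am bm])
  also have "\<dots> < \<top>" using A2 B2 by (simp add: ennreal_mult_less_top)
  finally have "(\<integral>\<^sup>+ q. a q * b q \<partial>\<mu>) < \<top>" by (rule sq_lt_top)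
  moreover have "(\<integral>\<^sup>+ q. ennreal (norm (hh \<epsilon> f p q)) \<partial>\<mu>) \<le> (\<integral>\<^sup>+ q. a q * b q \<partial>\<mu>)"
    by (intro nn_integral_mono pw)
  ultimately have "(\<integral>\<^sup>+ q. ennreal (norm (hh \<epsilon> f p q)) \<partial>\<mu>) < \<infinity>"
    by (simp add: le_less_trans)
  then show ?thesis
    by (intro integrableI_bounded) (subst measurable_cong_sets[OF sets_mu refl], rule hh_p_meas[OF f])
qed

end

context core begin

definition gW :: "real \<Rightarrow> ('a \<Rightarrow> real) \<Rightarrow> 'a set \<Rightarrow> 'a \<Rightarrow> real" where
  "gW \<epsilon> f W p = (\<integral>q. indicator W q * hh \<epsilon> f p q \<partial>\<mu>)"

lemma gW_meas:
  assumes f: "f \<in> borel_measurable borel" and W: "W \<in> sets borel"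
  shows "gW \<epsilon> f W \<in> borel_measurable borel"
  unfolding gW_def by (rule T_meas[OF f]) (use W in simp)

lemma decomp:
  assumes f: "f \<in> borel_measurable borel" and Ff: "(\<integral>\<^sup>+ q. ennreal ((f q)\<^sup>2) \<partial>\<mu>) < \<infinity>"
    and e: "\<epsilon> > 0" and p: "p \<in> dsupp d \<mu>"
  shows "trunc_SIO gmul d K \<mu> \<epsilon> f p = gW \<epsilon> f A p + gW \<epsilon> f B' p"
proof -
  have int: "integrable \<mu> (hh \<epsilon> f p)" by (rule integ[OF f Ff e p])
  have iA: "integrable \<mu> (\<lambda>q. indicator A q * hh \<epsilon> f p q)"
    using integrable_mult_indicator[OF _ int, of A] AB_meas by simp
  have iB: "integrable \<mu> (\<lambda>q. indicator B' q * hh \<epsilon> f p q)"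
    using integrable_mult_indicator[OF _ int, of B'] AB_meas by simp
  have ae: "AE q in \<mu>. hh \<epsilon> f p q = indicator A q * hh \<epsilon> f p q + indicator B' q * hh \<epsilon> f p q"
    using supp_facts(3)[OF radon] AB_null
  proof eventually_elim
    case (elim q)
    then show ?case using suppAB by (auto simp: indicator_def)
  qed
  have "trunc_SIO gmul d K \<mu> \<epsilon> f p = (\<integral>q. hh \<epsilon> f p q \<partial>\<mu>)" by (rule trunc_eq)
  also have "\<dots> = (\<integral>q. indicator A q * hh \<epsilon> f p q + indicator B' q * hh \<epsilon> f p q \<partial>\<mu>)"
    by (rule integral_cong_AE) (use ae iA iB int in \<open>auto intro!: borel_measurable_add borel_measurable_integrable\<close>)
  also have "\<dots> = gW \<epsilon> f A p + gW \<epsilon> f B' p"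
    unfolding gW_def by (rule Bochner_Integration.integral_add[OF iA iB])
  finally show ?thesis .
qed

lemma far:
  assumes "emeasure \<mu> B' \<noteq> 0"
  obtains q0 D where "q0 \<in> B'" "D > 0"
    "\<And>p q. p \<in> A \<Longrightarrow> q \<in> B' \<Longrightarrow> D \<le> d p q"
    "emeasure \<mu> B' \<le> ennreal (CR * D)"
    "\<And>p q. p \<in> A \<Longrightarrow> q \<in> B' \<Longrightarrow> d q0 p \<le> 2 * d p q"
    "\<And>p. p \<in> A \<Longrightarrow> D \<le> d q0 p"
proof -
  consider "B' = {}" | x where "B' = {x}" | q0 D where "q0 \<in> B'" "D > 0" "ddiam d B' = ereal D"
    using B'_cases by blast
  then show ?thesis
  proof cases
    case 1 then show ?thesis using assms by simp
  next
    case 2 then show ?thesis using assms singleton_null by simp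
  next
    case 3
    have i: "d p q \<le> D" if "p \<in> B'" "q \<in> B'" for p q
      using le_ddiam[OF that, of d] 3(3) by simp
    have ii: "D \<le> d p q" if "p \<in> A" "q \<in> B'" for p q
      using ddist_le[OF that, of d] sep 3(3) by (metis ereal_less_eq(3) order_trans)
    have q0s: "q0 \<in> dsupp d \<mu>" using 3(1) suppAB by auto
    have "B' \<subseteq> dball d q0 D" using i 3(1) unfolding dball_def by auto
    then have "emeasure \<mu> B' \<le> emeasure \<mu> (dball d q0 D)"
      by (rule emeasure_mono) simp
    also have "\<dots> \<le> ennreal (CR * D)" by (rule upper_reg[OF q0s 3(2)])
    finally have iii: "emeasure \<mu> B' \<le> ennreal (CR * D)" .
    have vi: "d q0 p \<le> 2 * d p q" if "p \<in> A" "q \<in> B'" for p q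
    proof -
      have "d q0 p \<le> d q0 q + d q p" by (rule dtri)
      moreover have "d q0 q \<le> D" using i[OF 3(1) that(2)] .
      moreover have "D \<le> d p q" using ii[OF that] .
      ultimately show ?thesis using dsym[of q p] by linarith
    qed
    have vii: "D \<le> d q0 p" if "p \<in> A" for p
      using ii[OF that 3(1)] dsym[of p q0] by simp
    show ?thesis using that[OF 3(1,2) ii iii vi vii] .
  qed
qed

end

context core begin

lemma abs_integral_le: "ennreal \<bar>integral\<^sup>L \<mu> g\<bar> \<le> (\<integral>\<^sup>+ q. ennreal \<bar>g q\<bar> \<partial>\<mu>)"
proof (cases "integrable \<mu> g")
  case True
  then show ?thesis using integral_norm_bound_ennreal[OF True] by simp
next
  case False
  then show ?thesis by (simp add: not_integrable_integral_eq)
qed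

lemma meas_mu: "g \<in> borel_measurable borel \<Longrightarrow> g \<in> borel_measurable \<mu>"
  by (subst measurable_cong_sets[OF sets_mu refl])

lemma gW_null:
  assumes "emeasure \<mu> B' = 0" and f: "f \<in> borel_measurable borel"
  shows "gW \<epsilon> f B' p = 0"
proof -
  have N: "B' \<in> null_sets \<mu>" using assms AB_meas by (intro null_setsI) simp_all
  have "AE q in \<mu>. indicator B' q * hh \<epsilon> f p q = 0"
    using AE_not_in[OF N] by eventually_elim simp
  then have "(\<integral>q. indicator B' q * hh \<epsilon> f p q \<partial>\<mu>) = (\<integral>q. 0 \<partial>\<mu>)"
    by (intro integral_cong_AE) (auto intro!: meas_mu borel_measurable_times hh_p_meas f)
  then show ?thesis unfolding gW_def by simp
qed

lemma ind_sq: "(ennreal (indicator W q))\<^sup>2 = indicator W q"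
  by (simp add: indicator_def)

lemma crossAB:
  assumes f: "f \<in> borel_measurable borel" and e: "\<epsilon> > 0"
  shows "(\<integral>\<^sup>+ p. indicator A p * ennreal ((gW \<epsilon> f B' p)\<^sup>2) \<partial>\<mu>)
           \<le> ennreal (16 * Bk\<^sup>2 * CR\<^sup>2) * (\<integral>\<^sup>+ q. ennreal ((f q)\<^sup>2) \<partial>\<mu>)"
  (is "?L \<le> _ * ?F")
proof (cases "emeasure \<mu> B' = 0")
  case True
  then show ?thesis using gW_null[OF True f] by simp
next
  case False
  obtain q0 D where q0: "q0 \<in> B'" and D: "D > 0"
    and ii: "\<And>p q. p \<in> A \<Longrightarrow> q \<in> B' \<Longrightarrow> D \<le> d p q"
    and iii: "emeasure \<mu> B' \<le> ennreal (CR * D)"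
    and vi: "\<And>p q. p \<in> A \<Longrightarrow> q \<in> B' \<Longrightarrow> d q0 p \<le> 2 * d p q"
    and vii: "\<And>p. p \<in> A \<Longrightarrow> D \<le> d q0 p"
    using far[OF False] by blast
  have fm: "(\<lambda>q. ennreal \<bar>f q\<bar>) \<in> borel_measurable \<mu>"
    by (intro meas_mu measurable_compose[OF _ measurable_ennreal] borel_measurable_abs f)
  have im: "(\<lambda>q. ennreal (indicator B' q)) \<in> borel_measurable \<mu>"
    by (intro meas_mu measurable_compose[OF _ measurable_ennreal] borel_measurable_indicator) (use AB_meas in simp)
  define J where "J = (\<integral>\<^sup>+ q. ennreal (indicator B' q * \<bar>f q\<bar>) \<partial>\<mu>)"
  have "J = (\<integral>\<^sup>+ q. ennreal (indicator B' q) * ennreal \<bar>f q\<bar> \<partial>\<mu>)"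
    unfolding J_def by (intro nn_integral_cong) (simp add: ennreal_mult')
  then have "J\<^sup>2 \<le> (\<integral>\<^sup>+ q. (ennreal (indicator B' q))\<^sup>2 \<partial>\<mu>) * (\<integral>\<^sup>+ q. (ennreal \<bar>f q\<bar>)\<^sup>2 \<partial>\<mu>)"
    using Cauchy_Schwarz_nn_integral[OF im fm] by simp
  also have "(\<integral>\<^sup>+ q. (ennreal (indicator B' q))\<^sup>2 \<partial>\<mu>) = emeasure \<mu> B'"
    unfolding ind_sq using AB_meas by simp
  also have "(\<integral>\<^sup>+ q. (ennreal \<bar>f q\<bar>)\<^sup>2 \<partial>\<mu>) = ?F" by (rule abs_f_sq)
  finally have J2: "J\<^sup>2 \<le> ennreal (CR * D) * ?F"
    using iii by (meson dual_order.trans mult_right_mono zero_le)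
  have pw: "indicator A p * ennreal ((gW \<epsilon> f B' p)\<^sup>2)
     \<le> indicator {p. D \<le> d q0 p} p * ennreal (1 / (d q0 p)\<^sup>2) * (ennreal (4 * Bk\<^sup>2) * (ennreal (CR * D) * ?F))" for p
  proof (cases "p \<in> A")
    case False then show ?thesis by simp
  next
    case pA: True
    have dq: "D \<le> d q0 p" using vii[OF pA] .
    define c where "c = 2 * Bk / d q0 p"
    have c0: "0 \<le> c" unfolding c_def using Bk0 D dq by simp
    have pq: "\<bar>indicator B' q * hh \<epsilon> f p q\<bar> \<le> c * (indicator B' q * \<bar>f q\<bar>)" for q
    proof (cases "q \<in> B' \<and> d p q > \<epsilon>")
      case True
      have "\<bar>hh \<epsilon> f p q\<bar> \<le> (Bk / d p q) * \<bar>f q\<bar>" using hh_bound[OF e, of f p q] True by simp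
      also have "Bk / d p q \<le> c"
      proof -
        have "d q0 p \<le> 2 * d p q" using vi[OF pA] True by blast
        then have "Bk / d p q = 2 * Bk / (2 * d p q)" by simp
        also have "\<dots> \<le> 2 * Bk / d q0 p" using Bk0 D dq \<open>d q0 p \<le> 2 * d p q\<close>
          by (intro divide_left_mono) auto
        finally show ?thesis unfolding c_def .
      qed
      then have "(Bk / d p q) * \<bar>f q\<bar> \<le> c * \<bar>f q\<bar>" by (rule mult_right_mono) simp
      finally show ?thesis using True by simp
    next
      case False
      then show ?thesis
      proof (cases "q \<in> B'")
        case True
        with False have "\<not> d p q > \<epsilon>" by blast
        then show ?thesis using True c0 by (simp add: hh_def)
      qed simp
    qed
    have "ennreal \<bar>gW \<epsilon> f B' p\<bar> \<le> (\<integral>\<^sup>+ q. ennreal \<bar>indicator B' q * hh \<epsilon> f p q\<bar> \<partial>\<mu>)"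
      unfolding gW_def by (rule abs_integral_le)
    also have "\<dots> \<le> (\<integral>\<^sup>+ q. ennreal c * ennreal (indicator B' q * \<bar>f q\<bar>) \<partial>\<mu>)"
      by (intro nn_integral_mono) (use pq c0 in \<open>auto simp: ennreal_mult'[symmetric] intro: ennreal_leI\<close>)
    also have "\<dots> = ennreal c * J" unfolding J_def
      by (rule nn_integral_cmult) (intro meas_mu measurable_compose[OF _ measurable_ennreal] borel_measurable_times borel_measurable_abs f borel_measurable_indicator, use AB_meas in simp)
    finally have "ennreal ((gW \<epsilon> f B' p)\<^sup>2) \<le> (ennreal c * J)\<^sup>2" by (rule ennreal_sq_le)
    also have "\<dots> = ennreal (c\<^sup>2) * J\<^sup>2" using c0 by (simp add: power_mult_distrib ennreal_power)
    also have "\<dots> \<le> ennreal (c\<^sup>2) * (ennreal (CR * D) * ?F)" by (intro mult_left_mono J2) simp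
    also have "ennreal (c\<^sup>2) = ennreal (1 / (d q0 p)\<^sup>2) * ennreal (4 * Bk\<^sup>2)"
    proof -
      have "c\<^sup>2 = 1 / (d q0 p)\<^sup>2 * (4 * Bk\<^sup>2)" unfolding c_def by (simp add: power_divide field_simps)
      then show ?thesis by (simp add: ennreal_mult[symmetric])
    qed
    finally show ?thesis using pA dq by (simp add: mult.assoc)
  qed
  have "?L \<le> (\<integral>\<^sup>+ p. indicator {p. D \<le> d q0 p} p * ennreal (1 / (d q0 p)\<^sup>2) * (ennreal (4 * Bk\<^sup>2) * (ennreal (CR * D) * ?F)) \<partial>\<mu>)"
    by (intro nn_integral_mono pw)
  also have "\<dots> = (\<integral>\<^sup>+ p. indicator {p. D \<le> d q0 p} p * ennreal (1 / (d q0 p)\<^sup>2) \<partial>\<mu>) * (ennreal (4 * Bk\<^sup>2) * (ennreal (CR * D) * ?F))"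
    by (rule nn_integral_multc) (subst measurable_cong_sets[OF sets_mu refl], measurable)
  also have "\<dots> \<le> ennreal (4 * CR / D) * (ennreal (4 * Bk\<^sup>2) * (ennreal (CR * D) * ?F))"
    using q0 suppAB by (intro mult_right_mono tail D) auto
  also have "\<dots> = (ennreal (4 * CR / D) * ennreal (4 * Bk\<^sup>2) * ennreal (CR * D)) * ?F"
    by (simp only: mult.assoc)
  also have "ennreal (4 * CR / D) * ennreal (4 * Bk\<^sup>2) * ennreal (CR * D) = ennreal (16 * Bk\<^sup>2 * CR\<^sup>2)"
  proof -
    have "ennreal (4 * CR / D) * ennreal (4 * Bk\<^sup>2) = ennreal (4 * CR / D * (4 * Bk\<^sup>2))"
      by (rule ennreal_mult[symmetric]) (use D CR1 in auto)
    moreover have "ennreal (4 * CR / D * (4 * Bk\<^sup>2)) * ennreal (CR * D) = ennreal (4 * CR / D * (4 * Bk\<^sup>2) * (CR * D))"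
      by (rule ennreal_mult[symmetric]) (use D CR1 in auto)
    moreover have "4 * CR / D * (4 * Bk\<^sup>2) * (CR * D) = 16 * Bk\<^sup>2 * CR\<^sup>2"
      using D by (simp add: field_simps power2_eq_square)
    ultimately show ?thesis by simp
  qed
  finally show ?thesis .
qed

end

context core begin

lemma crossBA:
  assumes f: "f \<in> borel_measurable borel" and e: "\<epsilon> > 0"
  shows "(\<integral>\<^sup>+ p. indicator B' p * ennreal ((gW \<epsilon> f A p)\<^sup>2) \<partial>\<mu>)
           \<le> ennreal (16 * Bk\<^sup>2 * CR\<^sup>2) * (\<integral>\<^sup>+ q. ennreal ((f q)\<^sup>2) \<partial>\<mu>)"
  (is "?L \<le> _ * ?F")
proof (cases "emeasure \<mu> B' = 0")
  case True
  have N: "B' \<in> null_sets \<mu>" using True AB_meas by (intro null_setsI) simp_all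
  have "?L = (\<integral>\<^sup>+ p. 0 \<partial>\<mu>)"
    by (rule nn_integral_cong_AE) (use AE_not_in[OF N] in \<open>eventually_elim, simp\<close>)
  then show ?thesis by simp
next
  case False
  obtain q0 D where q0: "q0 \<in> B'" and D: "D > 0"
    and ii: "\<And>p q. p \<in> A \<Longrightarrow> q \<in> B' \<Longrightarrow> D \<le> d p q"
    and iii: "emeasure \<mu> B' \<le> ennreal (CR * D)"
    and vi: "\<And>p q. p \<in> A \<Longrightarrow> q \<in> B' \<Longrightarrow> d q0 p \<le> 2 * d p q"
    and vii: "\<And>p. p \<in> A \<Longrightarrow> D \<le> d q0 p"
    using far[OF False] by blast
  define a where "a q = ennreal (2 * Bk * (indicator {q. D \<le> d q0 q} q / d q0 q))" for q
  define b where "b q = ennreal \<bar>f q\<bar>" for q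
  have am: "a \<in> borel_measurable \<mu>" unfolding a_def
    by (subst measurable_cong_sets[OF sets_mu refl]) measurable
  have bm: "b \<in> borel_measurable \<mu>" unfolding b_def
    by (intro meas_mu measurable_compose[OF _ measurable_ennreal] borel_measurable_abs f)
  have a2: "(a q)\<^sup>2 \<le> ennreal (4 * Bk\<^sup>2) * (indicator {q. D \<le> d q0 q} q * ennreal (1 / (d q0 q)\<^sup>2))" for q
  proof (cases "D \<le> d q0 q")
    case True
    have "(a q)\<^sup>2 = ennreal ((2 * Bk / d q0 q)\<^sup>2)" unfolding a_def using True Bk0 D
      by (simp add: ennreal_power)
    also have "\<dots> = ennreal (4 * Bk\<^sup>2) * ennreal (1 / (d q0 q)\<^sup>2)"
      by (simp add: power_divide ennreal_mult[symmetric] power_mult_distrib)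
    finally show ?thesis using True by simp
  qed (simp add: a_def)
  have "(\<integral>\<^sup>+ q. (a q)\<^sup>2 \<partial>\<mu>) \<le> (\<integral>\<^sup>+ q. ennreal (4 * Bk\<^sup>2) * (indicator {q. D \<le> d q0 q} q * ennreal (1 / (d q0 q)\<^sup>2)) \<partial>\<mu>)"
    by (intro nn_integral_mono a2)
  also have "\<dots> = ennreal (4 * Bk\<^sup>2) * (\<integral>\<^sup>+ q. indicator {q. D \<le> d q0 q} q * ennreal (1 / (d q0 q)\<^sup>2) \<partial>\<mu>)"
    by (rule nn_integral_cmult) (subst measurable_cong_sets[OF sets_mu refl], measurable)
  also have "\<dots> \<le> ennreal (4 * Bk\<^sup>2) * ennreal (4 * CR / D)"
    using q0 suppAB by (intro mult_left_mono tail D) auto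
  finally have A2: "(\<integral>\<^sup>+ q. (a q)\<^sup>2 \<partial>\<mu>) \<le> ennreal (4 * Bk\<^sup>2) * ennreal (4 * CR / D)" .
  define M where "M = ennreal (4 * Bk\<^sup>2) * ennreal (4 * CR / D) * ?F"
  have pw: "indicator B' p * ennreal ((gW \<epsilon> f A p)\<^sup>2) \<le> M * indicator B' p" for p
  proof (cases "p \<in> B'")
    case False then show ?thesis by simp
  next
    case pB: True
    have pq: "ennreal \<bar>indicator A q * hh \<epsilon> f p q\<bar> \<le> a q * b q" for q
    proof (cases "q \<in> A \<and> d p q > \<epsilon>")
      case True
      have dq: "D \<le> d q0 q" using vii True by blast
      have dq2: "d q0 q \<le> 2 * d p q" using vi[of q p] True pB dsym[of q p] by simp
      have "\<bar>hh \<epsilon> f p q\<bar> \<le> (Bk / d p q) * \<bar>f q\<bar>" using hh_bound[OF e, of f p q] True by simp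
      also have "Bk / d p q \<le> 2 * Bk / d q0 q"
      proof -
        have "Bk / d p q = 2 * Bk / (2 * d p q)" by simp
        also have "\<dots> \<le> 2 * Bk / d q0 q" using Bk0 D dq dq2
          by (intro divide_left_mono) auto
        finally show ?thesis .
      qed
      then have "(Bk / d p q) * \<bar>f q\<bar> \<le> (2 * Bk / d q0 q) * \<bar>f q\<bar>" by (rule mult_right_mono) simp
      finally have "\<bar>indicator A q * hh \<epsilon> f p q\<bar> \<le> (2 * Bk * (indicator {q. D \<le> d q0 q} q / d q0 q)) * \<bar>f q\<bar>"
        using True dq by simp
      then show ?thesis unfolding a_def b_def using Bk0 D dq
        by (subst ennreal_mult'[symmetric]) (auto intro: ennreal_leI)
    next
      case False
      then show ?thesis
      proof (cases "q \<in> A")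
        case True
        with False have "\<not> d p q > \<epsilon>" by blast
        then show ?thesis using True by (simp add: hh_def)
      qed simp
    qed
    have "ennreal \<bar>gW \<epsilon> f A p\<bar> \<le> (\<integral>\<^sup>+ q. ennreal \<bar>indicator A q * hh \<epsilon> f p q\<bar> \<partial>\<mu>)"
      unfolding gW_def by (rule abs_integral_le)
    also have "\<dots> \<le> (\<integral>\<^sup>+ q. a q * b q \<partial>\<mu>)" by (intro nn_integral_mono pq)
    finally have "ennreal ((gW \<epsilon> f A p)\<^sup>2) \<le> (\<integral>\<^sup>+ q. a q * b q \<partial>\<mu>)\<^sup>2" by (rule ennreal_sq_le)
    also have "\<dots> \<le> (\<integral>\<^sup>+ q. (a q)\<^sup>2 \<partial>\<mu>) * (\<integral>\<^sup>+ q. (b q)\<^sup>2 \<partial>\<mu>)"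
      by (rule Cauchy_Schwarz_nn_integral[OF am bm])
    also have "(\<integral>\<^sup>+ q. (b q)\<^sup>2 \<partial>\<mu>) = ?F" unfolding b_def by (rule abs_f_sq)
    also have "(\<integral>\<^sup>+ q. (a q)\<^sup>2 \<partial>\<mu>) * ?F \<le> M" unfolding M_def by (intro mult_right_mono A2) simp
    finally show ?thesis using pB by simp
  qed
  have "?L \<le> (\<integral>\<^sup>+ p. M * indicator B' p \<partial>\<mu>)" by (intro nn_integral_mono pw)
  also have "\<dots> = M * emeasure \<mu> B'" by (rule nn_integral_cmult_indicator) (use AB_meas in simp)
  also have "\<dots> \<le> M * ennreal (CR * D)" by (intro mult_left_mono iii) simp
  also have "\<dots> = (ennreal (4 * Bk\<^sup>2) * ennreal (4 * CR / D) * ennreal (CR * D)) * ?F"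
    unfolding M_def by (simp only: mult.assoc mult.commute[of ?F] mult.left_commute[of ?F])
  also have "ennreal (4 * Bk\<^sup>2) * ennreal (4 * CR / D) * ennreal (CR * D) = ennreal (16 * Bk\<^sup>2 * CR\<^sup>2)"
  proof -
    have "ennreal (4 * Bk\<^sup>2) * ennreal (4 * CR / D) = ennreal (4 * Bk\<^sup>2 * (4 * CR / D))"
      by (rule ennreal_mult[symmetric]) (use D CR1 in auto)
    moreover have "ennreal (4 * Bk\<^sup>2 * (4 * CR / D)) * ennreal (CR * D) = ennreal (4 * Bk\<^sup>2 * (4 * CR / D) * (CR * D))"
      by (rule ennreal_mult[symmetric]) (use D CR1 in auto)
    moreover have "4 * Bk\<^sup>2 * (4 * CR / D) * (CR * D) = 16 * Bk\<^sup>2 * CR\<^sup>2"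
      using D by (simp add: field_simps power2_eq_square)
    ultimately show ?thesis by simp
  qed
  finally show ?thesis .
qed

end

lemma ennreal_arith4:
  fixes F :: ennreal and a b c e :: real
  assumes "0 \<le> a" "0 \<le> b" "0 \<le> c" "0 \<le> e"
  shows "2 * (ennreal a * F) + 2 * (ennreal b * F) + 2 * (ennreal c * F) + 2 * (ennreal e * F)
       = ennreal (2 * a + 2 * b + 2 * c + 2 * e) * F"
proof -
  have s1: "ennreal (2 * a + 2 * b + 2 * c + 2 * e) = ennreal (2 * a + 2 * b + 2 * c) + ennreal (2 * e)"
    by (rule ennreal_plus) (use assms in simp_all)
  have s2: "ennreal (2 * a + 2 * b + 2 * c) = ennreal (2 * a + 2 * b) + ennreal (2 * c)"
    by (rule ennreal_plus) (use assms in simp_all)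
  have s3: "ennreal (2 * a + 2 * b) = ennreal (2 * a) + ennreal (2 * b)"
    by (rule ennreal_plus) (use assms in simp_all)
  have n: "ennreal (2 * x) = 2 * ennreal x" if "0 \<le> x" for x :: real
    by (rule numeral_mult_ennreal[symmetric]) (use that in simp)
  have "ennreal (2 * a + 2 * b + 2 * c + 2 * e) = 2 * ennreal a + 2 * ennreal b + 2 * ennreal c + 2 * ennreal e"
    unfolding s1 s2 s3 n[OF assms(1)] n[OF assms(2)] n[OF assms(3)] n[OF assms(4)] ..
  then show ?thesis by (simp only: distrib_right mult.assoc)
qed

context core begin

lemma diag:
  assumes W: "W \<in> sets borel" and S: "SIO_bounded gmul d K (restr_measure \<mu> W) C"
    and f: "f \<in> borel_measurable borel" and Ff: "(\<integral>\<^sup>+ q. ennreal ((f q)\<^sup>2) \<partial>\<mu>) < \<infinity>"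
    and e: "\<epsilon> > 0"
  shows "(\<integral>\<^sup>+ p. indicator W p * ennreal ((gW \<epsilon> f W p)\<^sup>2) \<partial>\<mu>) \<le> ennreal (C\<^sup>2) * (\<integral>\<^sup>+ q. ennreal ((f q)\<^sup>2) \<partial>\<mu>)"
proof -
  let ?\<nu> = "restr_measure \<mu> W"
  have Wm: "(\<lambda>x. ennreal (indicator W x)) \<in> borel_measurable \<mu>"
    by (intro meas_mu measurable_compose[OF _ measurable_ennreal] borel_measurable_indicator W)
  have ind: "(\<lambda>x. ennreal (indicator W x)) = indicator W" by (auto simp: indicator_def fun_eq_iff)
  have sn: "sets ?\<nu> = sets borel" unfolding restr_eq by (simp add: sets_mu)
  have fn: "f \<in> borel_measurable ?\<nu>" using f by (subst measurable_cong_sets[OF sn refl])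
  have f2m: "(\<lambda>q. ennreal ((f q)\<^sup>2)) \<in> borel_measurable \<mu>"
    by (intro meas_mu measurable_compose[OF _ measurable_ennreal] borel_measurable_power f)
  have nf: "(\<integral>\<^sup>+ q. ennreal ((f q)\<^sup>2) \<partial>?\<nu>) = (\<integral>\<^sup>+ q. indicator W q * ennreal ((f q)\<^sup>2) \<partial>\<mu>)"
    unfolding restr_eq by (subst nn_integral_density[OF Wm f2m]) (auto intro!: nn_integral_cong simp: indicator_def)
  also have "\<dots> \<le> (\<integral>\<^sup>+ q. ennreal ((f q)\<^sup>2) \<partial>\<mu>)"
    by (intro nn_integral_mono) (auto simp: indicator_def)
  finally have nfle: "(\<integral>\<^sup>+ q. ennreal ((f q)\<^sup>2) \<partial>?\<nu>) \<le> (\<integral>\<^sup>+ q. ennreal ((f q)\<^sup>2) \<partial>\<mu>)" .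
  have fin: "(\<integral>\<^sup>+ q. ennreal ((f q)\<^sup>2) \<partial>?\<nu>) < \<infinity>" using nfle Ff by (rule le_less_trans)
  have hyp: "(\<integral>\<^sup>+ p. ennreal ((trunc_SIO gmul d K ?\<nu> \<epsilon> f p)\<^sup>2) \<partial>?\<nu>)
      \<le> ennreal (C\<^sup>2) * (\<integral>\<^sup>+ q. ennreal ((f q)\<^sup>2) \<partial>?\<nu>)"
    using S e fn fin unfolding SIO_bounded_def by blast
  have tr: "trunc_SIO gmul d K ?\<nu> \<epsilon> f p = gW \<epsilon> f W p" for p
    unfolding gW_def by (rule trunc_restr_eq[OF f W])
  have gm: "(\<lambda>p. ennreal ((gW \<epsilon> f W p)\<^sup>2)) \<in> borel_measurable \<mu>"
    by (intro meas_mu measurable_compose[OF _ measurable_ennreal] borel_measurable_power gW_meas f W)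
  have e1: "(\<integral>\<^sup>+ p. ennreal ((trunc_SIO gmul d K ?\<nu> \<epsilon> f p)\<^sup>2) \<partial>?\<nu>) = (\<integral>\<^sup>+ p. ennreal ((gW \<epsilon> f W p)\<^sup>2) \<partial>?\<nu>)"
    by (simp only: tr)
  have e2: "(\<integral>\<^sup>+ p. ennreal ((gW \<epsilon> f W p)\<^sup>2) \<partial>?\<nu>) = (\<integral>\<^sup>+ p. indicator W p * ennreal ((gW \<epsilon> f W p)\<^sup>2) \<partial>\<mu>)"
    unfolding restr_eq by (subst nn_integral_density[OF Wm gm]) (auto intro!: nn_integral_cong simp: indicator_def)
  have "(\<integral>\<^sup>+ p. indicator W p * ennreal ((gW \<epsilon> f W p)\<^sup>2) \<partial>\<mu>)
      = (\<integral>\<^sup>+ p. ennreal ((trunc_SIO gmul d K ?\<nu> \<epsilon> f p)\<^sup>2) \<partial>?\<nu>)"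
    using e1 e2 by simp
  also have "\<dots> \<le> ennreal (C\<^sup>2) * (\<integral>\<^sup>+ q. ennreal ((f q)\<^sup>2) \<partial>?\<nu>)" by (rule hyp)
  also have "\<dots> \<le> ennreal (C\<^sup>2) * (\<integral>\<^sup>+ q. ennreal ((f q)\<^sup>2) \<partial>\<mu>)" by (intro mult_left_mono nfle) simp
  finally show ?thesis .
qed

lemma sq_sum_le: "ennreal ((x + y)\<^sup>2) \<le> ennreal (2 * x\<^sup>2 + 2 * y\<^sup>2)" for x y :: real
proof -
  have e: "2 * x\<^sup>2 + 2 * y\<^sup>2 - (x + y)\<^sup>2 = (x - y)\<^sup>2" by (simp add: power2_eq_square algebra_simps)
  have "0 \<le> (x - y)\<^sup>2" by simp
  then have "(x + y)\<^sup>2 \<le> 2 * x\<^sup>2 + 2 * y\<^sup>2" using e by linarith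
  then show ?thesis by (rule ennreal_leI)
qed

lemma core_bound:
  "SIO_bounded gmul d K \<mu> (sqrt (2 * C1\<^sup>2 + 2 * C2\<^sup>2 + 64 * Bk\<^sup>2 * CR\<^sup>2))"
  unfolding SIO_bounded_def
proof (intro conjI allI impI)
  show "0 \<le> sqrt (2 * C1\<^sup>2 + 2 * C2\<^sup>2 + 64 * Bk\<^sup>2 * CR\<^sup>2)" by simp
  fix \<epsilon> :: real and f
  assume e: "\<epsilon> > 0" and fF: "f \<in> borel_measurable \<mu> \<and> (\<integral>\<^sup>+ q. ennreal ((f q)\<^sup>2) \<partial>\<mu>) < \<infinity>"
  have f: "f \<in> borel_measurable borel" using fF by (subst (asm) measurable_cong_sets[OF sets_mu refl]) simp
  have Ff: "(\<integral>\<^sup>+ q. ennreal ((f q)\<^sup>2) \<partial>\<mu>) < \<infinity>" using fF by simp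
  let ?F = "(\<integral>\<^sup>+ q. ennreal ((f q)\<^sup>2) \<partial>\<mu>)"
  let ?gA = "gW \<epsilon> f A" and ?gB = "gW \<epsilon> f B'"
  define t where "t W g p = indicator W p * ennreal ((g p)\<^sup>2)" for W :: "'a set" and g :: "'a \<Rightarrow> real" and p
  have tm: "t W g \<in> borel_measurable \<mu>" if "W \<in> sets borel" "g \<in> borel_measurable borel" for W g
    unfolding t_def using that
    by (intro meas_mu borel_measurable_times_ennreal borel_measurable_indicator measurable_compose[OF _ measurable_ennreal] borel_measurable_power) auto
  have gAm: "?gA \<in> borel_measurable borel" by (rule gW_meas[OF f AB_meas(1)])
  have gBm: "?gB \<in> borel_measurable borel" by (rule gW_meas[OF f AB_meas(2)])
  have pw: "AE p in \<mu>. ennreal ((trunc_SIO gmul d K \<mu> \<epsilon> f p)\<^sup>2)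
     \<le> 2 * t A ?gA p + 2 * t A ?gB p + 2 * t B' ?gA p + 2 * t B' ?gB p"
    using supp_facts(3)[OF radon] AB_null
  proof eventually_elim
    case (elim p)
    have T: "trunc_SIO gmul d K \<mu> \<epsilon> f p = ?gA p + ?gB p" by (rule decomp[OF f Ff e elim(1)])
    have "ennreal ((trunc_SIO gmul d K \<mu> \<epsilon> f p)\<^sup>2) \<le> ennreal (2 * (?gA p)\<^sup>2 + 2 * (?gB p)\<^sup>2)"
      unfolding T by (rule sq_sum_le)
    also have "\<dots> = 2 * ennreal ((?gA p)\<^sup>2) + 2 * ennreal ((?gB p)\<^sup>2)"
    proof -
      have "ennreal (2 * (?gA p)\<^sup>2 + 2 * (?gB p)\<^sup>2) = ennreal (2 * (?gA p)\<^sup>2) + ennreal (2 * (?gB p)\<^sup>2)"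
        by (rule ennreal_plus) simp_all
      moreover have "ennreal (2 * (?gA p)\<^sup>2) = 2 * ennreal ((?gA p)\<^sup>2)"
        by (rule numeral_mult_ennreal[symmetric]) simp
      moreover have "ennreal (2 * (?gB p)\<^sup>2) = 2 * ennreal ((?gB p)\<^sup>2)"
        by (rule numeral_mult_ennreal[symmetric]) simp
      ultimately show ?thesis by simp
    qed
    also have "\<dots> \<le> 2 * t A ?gA p + 2 * t A ?gB p + 2 * t B' ?gA p + 2 * t B' ?gB p"
    proof (cases "p \<in> A")
      case True
      then have "p \<notin> B'" using elim(2) by blast
      then show ?thesis using True unfolding t_def by simp
    next
      case False
      then have "p \<in> B'" using elim(1) suppAB by blast
      then show ?thesis using False unfolding t_def by simp
    qed
    finally show ?case .
  qed
  have "(\<integral>\<^sup>+ p. ennreal ((trunc_SIO gmul d K \<mu> \<epsilon> f p)\<^sup>2) \<partial>\<mu>)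
      \<le> (\<integral>\<^sup>+ p. 2 * t A ?gA p + 2 * t A ?gB p + 2 * t B' ?gA p + 2 * t B' ?gB p \<partial>\<mu>)"
    by (rule nn_integral_mono_AE[OF pw])
  also have "\<dots> = 2 * integral\<^sup>N \<mu> (t A ?gA) + 2 * integral\<^sup>N \<mu> (t A ?gB) + 2 * integral\<^sup>N \<mu> (t B' ?gA) + 2 * integral\<^sup>N \<mu> (t B' ?gB)"
    using tm[OF AB_meas(1) gAm] tm[OF AB_meas(1) gBm] tm[OF AB_meas(2) gAm] tm[OF AB_meas(2) gBm]
    by (simp add: nn_integral_add nn_integral_cmult)
  also have "\<dots> \<le> 2 * (ennreal (C1\<^sup>2) * ?F) + 2 * (ennreal (16 * Bk\<^sup>2 * CR\<^sup>2) * ?F)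
                 + 2 * (ennreal (16 * Bk\<^sup>2 * CR\<^sup>2) * ?F) + 2 * (ennreal (C2\<^sup>2) * ?F)"
    unfolding t_def
    by (intro add_mono mult_left_mono diag[OF AB_meas(1) S1 f Ff e] diag[OF AB_meas(2) S2 f Ff e]
        crossAB[OF f e] crossBA[OF f e]) simp_all
  also have "\<dots> = ennreal (2 * C1\<^sup>2 + 2 * (16 * Bk\<^sup>2 * CR\<^sup>2) + 2 * (16 * Bk\<^sup>2 * CR\<^sup>2) + 2 * C2\<^sup>2) * ?F"
    by (rule ennreal_arith4) simp_all
  also have "2 * C1\<^sup>2 + 2 * (16 * Bk\<^sup>2 * CR\<^sup>2) + 2 * (16 * Bk\<^sup>2 * CR\<^sup>2) + 2 * C2\<^sup>2
      = (sqrt (2 * C1\<^sup>2 + 2 * C2\<^sup>2 + 64 * Bk\<^sup>2 * CR\<^sup>2))\<^sup>2"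
    by simp
  finally show "(\<integral>\<^sup>+ p. ennreal ((trunc_SIO gmul d K \<mu> \<epsilon> f p)\<^sup>2) \<partial>\<mu>)
      \<le> ennreal ((sqrt (2 * C1\<^sup>2 + 2 * C2\<^sup>2 + 64 * Bk\<^sup>2 * CR\<^sup>2))\<^sup>2) * ?F" .
qed

end

lemma K_meas:
  assumes "continuous_on (UNIV - {0}) K" "carnot_group gmul V s"
  shows "(\<lambda>z. K (gmul (- snd z) (fst z))) \<in> borel_measurable borel"
proof -
  have "(\<lambda>x. if x \<in> UNIV - {0} then K x else K x) \<in> borel_measurable borel"
    by (rule borel_measurable_continuous_on_if) (use assms(1) in \<open>auto simp: continuous_on_sing\<close>)
  then have Km: "K \<in> borel_measurable borel" by simp
  have gm: "(\<lambda>z. gmul (- snd z) (fst z)) \<in> borel_measurable borel"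
    by (rule borel_measurable_continuous_onI[OF gmul_cont2[OF assms(2)]])
  show ?thesis using measurable_compose[OF gm Km] by (simp add: o_def)
qed

theorem lemma4p1:
  fixes gmul :: "'a::euclidean_space \<Rightarrow> 'a \<Rightarrow> 'a"
    and V :: "nat \<Rightarrow> 'a set" and s :: nat
    and dil :: "real \<Rightarrow> 'a \<Rightarrow> 'a"
    and d :: "'a \<Rightarrow> 'a \<Rightarrow> real"
    and C1 C2 CR Bk :: real
  assumes "carnot_group gmul V s"
    and "carnot_dilations V s dil"
    and "homogeneous_distance gmul dil d"
  shows "\<exists>C. \<forall>(K :: 'a \<Rightarrow> real) (\<mu> :: 'a measure) A B'.
           continuous_on (UNIV - {0}) K \<and>
           (\<forall>p. p \<noteq> 0 \<longrightarrow> \<bar>K p\<bar> \<le> Bk / d p 0) \<and>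
           radon_measure \<mu> \<and> one_regular d \<mu> CR \<and>
           dsupp d \<mu> = A \<union> B' \<and> d_bounded d B' \<and> ddiam d B' \<le> ddist d A B' \<and>
           SIO_bounded gmul d K (restr_measure \<mu> A) C1 \<and>
           SIO_bounded gmul d K (restr_measure \<mu> B') C2
           \<longrightarrow> SIO_bounded gmul d K \<mu> C"
proof (intro exI allI impI)
  fix K :: "'a \<Rightarrow> real" and \<mu> :: "'a measure" and A B'
  assume H: "continuous_on (UNIV - {0}) K \<and>
           (\<forall>p. p \<noteq> 0 \<longrightarrow> \<bar>K p\<bar> \<le> Bk / d p 0) \<and>
           radon_measure \<mu> \<and> one_regular d \<mu> CR \<and>
           dsupp d \<mu> = A \<union> B' \<and> d_bounded d B' \<and> ddiam d B' \<le> ddist d A B' \<and>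
           SIO_bounded gmul d K (restr_measure \<mu> A) C1 \<and>
           SIO_bounded gmul d K (restr_measure \<mu> B') C2"
  have hd: "(\<forall>x y. d x y = 0 \<longleftrightarrow> x = y) \<and> (\<forall>x y. d x y = d y x) \<and>
     (\<forall>x y z. d x z \<le> d x y + d y z) \<and> continuous_on UNIV (\<lambda>z::'a \<times> 'a. d (fst z) (snd z))"
    using assms(3) unfolding homogeneous_distance_def by blast
  interpret dm d by unfold_locales (use hd in auto)
  have Bk0: "0 \<le> Bk"
  proof -
    obtain b :: 'a where b: "b \<in> Basis" using nonempty_Basis by blast
    then have b0: "b \<noteq> 0" by auto
    have "d b 0 > 0" using dnn[of b 0] d0[of b 0] b0 by simp
    moreover have "0 \<le> Bk / d b 0" using H b0 by (meson abs_ge_zero order_trans)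
    ultimately show ?thesis by (simp add: zero_le_divide_iff)
  qed
  have kb: "\<bar>K (gmul (- q) p)\<bar> \<le> Bk / d p q" if "p \<noteq> q" for p q
    by (rule kernel_bound[OF assms(1) assms(3)]) (use H that in auto)
  show "SIO_bounded gmul d K \<mu> (sqrt (2 * C1\<^sup>2 + 2 * C2\<^sup>2 + 64 * Bk\<^sup>2 * CR\<^sup>2))"
  proof (cases "ddiam d (dsupp d \<mu>) > 0")
    case True
    interpret core d \<mu> CR gmul K Bk A B' C1 C2
      by unfold_locales (use H True Bk0 kb K_meas[OF _ assms(1), of K] in auto)
    show ?thesis by (rule core_bound)
  next
    case False
    have rad: "radon_measure \<mu>" using H by blast
    have sm: "sets \<mu> = sets borel" using rad unfolding radon_measure_def by blast
    have z: "trunc_SIO gmul d K \<mu> \<epsilon> f p = 0" if p: "p \<in> dsupp d \<mu>" and e: "\<epsilon> > 0" for \<epsilon> f p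
    proof -
      have "AE q in \<mu>. indicator {q. d p q > \<epsilon>} q * K (gmul (- q) p) * f q = 0"
        using supp_facts(3)[OF rad]
      proof eventually_elim
        case (elim q)
        have "ereal (d p q) \<le> ddiam d (dsupp d \<mu>)" by (rule le_ddiam[OF p elim])
        also have "\<dots> \<le> 0" using False by simp
        finally have "d p q \<le> 0" by simp
        then show ?case using e by simp
      qed
      then have "(\<integral>q. indicator {q. d p q > \<epsilon>} q * K (gmul (- q) p) * f q \<partial>\<mu>) = 0"
        by (rule integral_eq_zero_AE)
      then show ?thesis unfolding trunc_SIO_def by simp
    qed
    show ?thesis unfolding SIO_bounded_def
    proof (intro conjI allI impI)
      fix \<epsilon> :: real and f :: "'a \<Rightarrow> real"
      assume e: "\<epsilon> > 0"
      have "(\<integral>\<^sup>+ p. ennreal ((trunc_SIO gmul d K \<mu> \<epsilon> f p)\<^sup>2) \<partial>\<mu>) = (\<integral>\<^sup>+ p. 0 \<partial>\<mu>)"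
      proof (rule nn_integral_cong_AE)
        show "AE p in \<mu>. ennreal ((trunc_SIO gmul d K \<mu> \<epsilon> f p)\<^sup>2) = 0"
          using supp_facts(3)[OF rad] by eventually_elim (use z e in simp)
      qed
      then show "(\<integral>\<^sup>+ p. ennreal ((trunc_SIO gmul d K \<mu> \<epsilon> f p)\<^sup>2) \<partial>\<mu>)
          \<le> ennreal ((sqrt (2 * C1\<^sup>2 + 2 * C2\<^sup>2 + 64 * Bk\<^sup>2 * CR\<^sup>2))\<^sup>2) * (\<integral>\<^sup>+ q. ennreal ((f q)\<^sup>2) \<partial>\<mu>)"
        by simp
    qed simp
  qed
qed

end
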